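(* Let $D$ be the standard contact $(2n-1)$-ball and $p_\pm\in\partial D$ its poles. Let $\Delta=D^{2n-2}\times[0,a]$ ($a>0$) be the Weinstein cylinder over the unit ball $D^{2n-2}\subset\mathbb{R}^{2n-2}$, with contact structure $\ker(\lambda_{st}+dz)$, and let $\partial_+\Delta=D^{2n-2}\times a$. Then for every $\epsilon>0$ there exists a contact embedding $h:\Delta\to D$ such that $h(\partial_+\Delta)\subset\partial D$, the set $\partial D\setminus h(\partial_+\Delta)$ is contained in the $\epsilon$-neighborhood of the pole $p_-$, and $D\setminus h(\Delta)$ is contained in the $\epsilon$-neighborhood of $\partial D$.
   Context: The standard contact $(2n-1)$-ball is the hemisphere $D=S^{2n-1}\cap\{y_n\ge0\}\subset\mathbb{R}^{2n}$ with contact structure $\ker\big(\sum_{j=1}^n(x_jdy_j-y_jdx_j)|_{S^{2n-1}}\big)$; its boundary is $S^{2n-1}\cap\{y_n=0\}$ and its poles are $p_\pm=\{x_n=\pm1$, all other coordinates $0\}$. Distances are taken with respect to the metric induced from $\mathbb{R}^{2n}$. On $\mathbb{R}^{2n-2}$, $\lambda_{st}=\sum_{j=1}^{n-1}(x_jdy_j-y_jdx_j)$, and $z$ is the coordinate on $[0,a]$. *)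

theory Defs
  imports "HOL-Analysis.Analysis"
begin

primrec Ck_on :: "nat \<Rightarrow> ('a::euclidean_space \<Rightarrow> 'b::real_normed_vector) \<Rightarrow> 'a set \<Rightarrow> bool" where
  "Ck_on 0 f U = continuous_on U f"
| "Ck_on (Suc k) f U =
     (\<exists>f'. (\<forall>x\<in>U. (f has_derivative f' x) (at x)) \<and> (\<forall>b\<in>Basis. Ck_on k (\<lambda>x. f' x b) U))"

definition smooth_on :: "('a::euclidean_space \<Rightarrow> 'b::real_normed_vector) \<Rightarrow> 'a set \<Rightarrow> bool" where
  "smooth_on f U \<longleftrightarrow> open U \<and> (\<forall>k. Ck_on k f U)"

text \<open>With CARD('k) = n-1, a point of R^{2n} is written ((x',y'),(x_n,y_n))
with x',y' in R^{n-1}; a point of R^{2n-2} is (x',y'); a point of the cylinder is ((x',y'),z).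
The product norms in Isabelle are Euclidean, so distances are the Euclidean ones.\<close>

type_synonym 'k R2m = "(real^'k) \<times> (real^'k)"
type_synonym 'k R2n = "'k R2m \<times> (real \<times> real)"
type_synonym 'k cyl = "'k R2m \<times> real"

text \<open>lambda_st = sum_{j<n} (x_j dy_j - y_j dx_j), evaluated at point p on vector v.\<close>
definition lambda_st :: "'k::finite R2m \<Rightarrow> 'k R2m \<Rightarrow> real" where
  "lambda_st p v = fst p \<bullet> snd v - snd p \<bullet> fst v"

definition alpha_std :: "'k::finite R2n \<Rightarrow> 'k R2n \<Rightarrow> real" where
  "alpha_std p v = lambda_st (fst p) (fst v)
      + (fst (snd p) * snd (snd v) - snd (snd p) * fst (snd v))"

definition beta_cyl :: "'k::finite cyl \<Rightarrow> 'k cyl \<Rightarrow> real" where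
  "beta_cyl q v = lambda_st (fst q) (fst v) + snd v"

definition std_ball :: "'k::finite R2n set" where
  "std_ball = {p. norm p = 1 \<and> snd (snd p) \<ge> 0}"

definition std_ball_bdry :: "'k::finite R2n set" where
  "std_ball_bdry = {p. norm p = 1 \<and> snd (snd p) = 0}"

definition pole_plus :: "'k::finite R2n" where
  "pole_plus = ((0, 0), (1, 0))"

definition pole_minus :: "'k::finite R2n" where
  "pole_minus = ((0, 0), (-1, 0))"

definition wcyl :: "real \<Rightarrow> 'k::finite cyl set" where
  "wcyl a = {q. norm (fst q) \<le> 1 \<and> 0 \<le> snd q \<and> snd q \<le> a}"

definition wcyl_top :: "real \<Rightarrow> 'k::finite cyl set" where
  "wcyl_top a = {q. norm (fst q) \<le> 1 \<and> snd q = a}"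

text \<open>Contact embedding of Delta into D: h is (the restriction of) a smooth map on an open
neighbourhood of Delta, injective on Delta, with image in D, an immersion at every point of
Delta, and h^* alpha = f * beta with f nowhere zero on Delta (i.e. dh maps ker beta onto
ker alpha restricted to TD).\<close>
definition contact_embedding :: "real \<Rightarrow> ('k::finite cyl \<Rightarrow> 'k R2n) \<Rightarrow> bool" where
  "contact_embedding a h \<longleftrightarrow>
     (\<exists>U. wcyl a \<subseteq> U \<and> smooth_on h U) \<and>
     inj_on h (wcyl a) \<and> h ` wcyl a \<subseteq> std_ball \<and>
     (\<forall>q\<in>wcyl a. inj (frechet_derivative h (at q)) \<and>
        (\<exists>f::real. f \<noteq> 0 \<and>
           (\<forall>v. alpha_std (h q) (frechet_derivative h (at q) v) = f * beta_cyl q v)))"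

end

theory Submission
  imports Defs
begin


lemma Ck_Suc_D: "Ck_on (Suc k) f U \<Longrightarrow> Ck_on k f U"
proof (induction k arbitrary: f)
  case 0
  then obtain f' where "\<forall>x\<in>U. (f has_derivative f' x) (at x)" by auto
  then show ?case
    by (auto intro!: continuous_at_imp_continuous_on has_derivative_continuous)
next
  case (Suc k)
  then obtain f' where "\<forall>x\<in>U. (f has_derivative f' x) (at x)"
      "\<forall>b\<in>Basis. Ck_on (Suc k) (\<lambda>x. f' x b) U" by auto
  then show ?case using Suc.IH by auto
qed

lemma Ck_const: "Ck_on k (\<lambda>x. c) U"
proof (induction k arbitrary: c)
  case 0 then show ?case by simp
next
  case (Suc k)
  show ?case by (rule Ck_on.simps(2)[THEN iffD2], rule exI[of _ "\<lambda>x v. 0"]) (simp add: Suc.IH)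
qed

lemma Ck_add: "Ck_on k f U \<Longrightarrow> Ck_on k g U \<Longrightarrow> Ck_on k (\<lambda>x. f x + g x) U"
proof (induction k arbitrary: f g)
  case 0 then show ?case by (auto intro: continuous_on_add)
next
  case (Suc k)
  from Suc.prems(1) obtain f' where f: "\<forall>x\<in>U. (f has_derivative f' x) (at x)"
      "\<forall>b\<in>Basis. Ck_on k (\<lambda>x. f' x b) U" by auto
  from Suc.prems(2) obtain g' where g: "\<forall>x\<in>U. (g has_derivative g' x) (at x)"
      "\<forall>b\<in>Basis. Ck_on k (\<lambda>x. g' x b) U" by auto
  show ?case
    by (rule Ck_on.simps(2)[THEN iffD2], rule exI[of _ "\<lambda>x v. f' x v + g' x v"])
      (use f g Suc.IH in \<open>auto intro: has_derivative_add\<close>)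
qed

lemma Ck_linear_comp:
  assumes L: "bounded_linear L"
  shows "Ck_on k f U \<Longrightarrow> Ck_on k (\<lambda>x. L (f x)) U"
proof (induction k arbitrary: f)
  case 0 then show ?case
    using L by (auto intro: continuous_on_compose2[of UNIV L] linear_continuous_on)
next
  case (Suc k)
  from Suc.prems(1) obtain f' where f: "\<forall>x\<in>U. (f has_derivative f' x) (at x)"
      "\<forall>b\<in>Basis. Ck_on k (\<lambda>x. f' x b) U" by auto
  show ?case
    by (rule Ck_on.simps(2)[THEN iffD2], rule exI[of _ "\<lambda>x v. L (f' x v)"])
      (use f Suc.IH L in \<open>auto intro: bounded_linear.has_derivative\<close>)
qed

lemma Ck_id: "Ck_on k (\<lambda>x. x) U"
proof (cases k)
  case 0 then show ?thesis by (simp add: continuous_on_id)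
next
  case (Suc m)
  show ?thesis unfolding Suc
    by (rule Ck_on.simps(2)[THEN iffD2], rule exI[of _ "\<lambda>x v. v"]) (simp add: Ck_const)
qed

lemma Ck_linear: "bounded_linear L \<Longrightarrow> Ck_on k L U"
  using Ck_linear_comp[OF _ Ck_id] by blast

lemma Ck_bilinear:
  assumes P: "bounded_bilinear P"
  shows "Ck_on k f U \<Longrightarrow> Ck_on k g U \<Longrightarrow> Ck_on k (\<lambda>x. P (f x) (g x)) U"
proof (induction k arbitrary: f g)
  case 0 then show ?case using P by (auto intro: bounded_bilinear.continuous_on)
next
  case (Suc k)
  from Suc.prems(1) obtain f' where f: "\<forall>x\<in>U. (f has_derivative f' x) (at x)"
      "\<forall>b\<in>Basis. Ck_on k (\<lambda>x. f' x b) U" by auto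
  from Suc.prems(2) obtain g' where g: "\<forall>x\<in>U. (g has_derivative g' x) (at x)"
      "\<forall>b\<in>Basis. Ck_on k (\<lambda>x. g' x b) U" by auto
  have fk: "Ck_on k f U" "Ck_on k g U" using Suc.prems Ck_Suc_D by auto
  show ?case
    by (rule Ck_on.simps(2)[THEN iffD2], rule exI[of _ "\<lambda>x v. P (f x) (g' x v) + P (f' x v) (g x)"])
      (use f g fk Suc.IH P in \<open>auto intro!: bounded_bilinear.FDERIV Ck_add\<close>)
qed

lemma Ck_pair: "Ck_on k f U \<Longrightarrow> Ck_on k g U \<Longrightarrow> Ck_on k (\<lambda>x. (f x, g x)) U"
proof (induction k arbitrary: f g)
  case 0 then show ?case by (auto intro: continuous_on_Pair)
next
  case (Suc k)
  from Suc.prems(1) obtain f' where f: "\<forall>x\<in>U. (f has_derivative f' x) (at x)"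
      "\<forall>b\<in>Basis. Ck_on k (\<lambda>x. f' x b) U" by auto
  from Suc.prems(2) obtain g' where g: "\<forall>x\<in>U. (g has_derivative g' x) (at x)"
      "\<forall>b\<in>Basis. Ck_on k (\<lambda>x. g' x b) U" by auto
  show ?case
    by (rule Ck_on.simps(2)[THEN iffD2], rule exI[of _ "\<lambda>x v. (f' x v, g' x v)"])
      (use f g Suc.IH in \<open>auto intro: has_derivative_Pair\<close>)
qed

lemma Ck_inverse:
  fixes g :: "'a::euclidean_space \<Rightarrow> real"
  shows "Ck_on k g U \<Longrightarrow> \<forall>x\<in>U. g x \<noteq> 0 \<Longrightarrow> Ck_on k (\<lambda>x. inverse (g x)) U"
proof (induction k arbitrary: g)
  case 0 then show ?case by (auto intro: continuous_on_inverse)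
next
  case (Suc k)
  from Suc.prems(1) obtain g' where g: "\<forall>x\<in>U. (g has_derivative g' x) (at x)"
      "\<forall>b\<in>Basis. Ck_on k (\<lambda>x. g' x b) U" by auto
  have gk: "Ck_on k (\<lambda>x. inverse (g x)) U" using Suc Ck_Suc_D by blast
  have m: "Ck_on k (\<lambda>x. P x * Q x) U" if "Ck_on k P U" "Ck_on k Q U" for P Q :: "'a \<Rightarrow> real"
    using Ck_bilinear[OF bounded_bilinear_mult that] .
  have n: "Ck_on k (\<lambda>x. - P x) U" if "Ck_on k P U" for P :: "'a \<Rightarrow> real"
    using Ck_linear_comp[OF bounded_linear_minus[OF bounded_linear_ident] that] .
  show ?case
    by (rule Ck_on.simps(2)[THEN iffD2], rule exI[of _ "\<lambda>x v. - (inverse (g x) * g' x v * inverse (g x))"])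
      (use g gk Suc.prems(2) in \<open>auto intro!: has_derivative_inverse m n\<close>)
qed



lemma Ck_mult: "Ck_on k f U \<Longrightarrow> Ck_on k g U \<Longrightarrow> Ck_on k (\<lambda>x. f x * g x :: real) U"
  by (rule Ck_bilinear[OF bounded_bilinear_mult])
lemma Ck_scaleR: "Ck_on k f U \<Longrightarrow> Ck_on k g U \<Longrightarrow> Ck_on k (\<lambda>x. f x *\<^sub>R g x) U"
  by (rule Ck_bilinear[OF bounded_bilinear_scaleR])
lemma Ck_inner: "Ck_on k f U \<Longrightarrow> Ck_on k g U \<Longrightarrow> Ck_on k (\<lambda>x. f x \<bullet> g x) U"
  by (rule Ck_bilinear[OF bounded_bilinear_inner])
lemma Ck_fst: "Ck_on k f U \<Longrightarrow> Ck_on k (\<lambda>x. fst (f x)) U"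
  by (rule Ck_linear_comp[OF bounded_linear_fst])
lemma Ck_snd: "Ck_on k f U \<Longrightarrow> Ck_on k (\<lambda>x. snd (f x)) U"
  by (rule Ck_linear_comp[OF bounded_linear_snd])
lemma Ck_uminus: "Ck_on k f U \<Longrightarrow> Ck_on k (\<lambda>x. - f x) U"
  by (rule Ck_linear_comp[OF bounded_linear_minus[OF bounded_linear_ident]])
lemma Ck_diff: "Ck_on k f U \<Longrightarrow> Ck_on k g U \<Longrightarrow> Ck_on k (\<lambda>x. f x - g x) U"
  using Ck_add[OF _ Ck_uminus, of k f U g] by simp
lemma Ck_divide: "Ck_on k f U \<Longrightarrow> Ck_on k g U \<Longrightarrow> \<forall>x\<in>U. g x \<noteq> 0 \<Longrightarrow> Ck_on k (\<lambda>x. f x / g x :: real) U"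
  using Ck_mult[OF _ Ck_inverse, of k f U g] by (simp add: divide_inverse)
lemma Ck_power2: "Ck_on k f U \<Longrightarrow> Ck_on k (\<lambda>x. (f x)\<^sup>2 :: real) U"
  using Ck_mult[of k f U f] by (simp add: power2_eq_square)

lemmas Ck_rules = Ck_mult Ck_scaleR Ck_inner Ck_fst Ck_snd Ck_uminus Ck_diff Ck_add Ck_pair Ck_const Ck_id Ck_power2

definition hs :: "real \<Rightarrow> 'k::finite cyl \<Rightarrow> real" where
  "hs r q = r\<^sup>2 * (fst (fst q) \<bullet> fst (fst q) + snd (fst q) \<bullet> snd (fst q))"
definition ht :: "real \<Rightarrow> real \<Rightarrow> 'k::finite cyl \<Rightarrow> real" where
  "ht r a q = 2 * r\<^sup>2 * (a - snd q)"
definition hD :: "real \<Rightarrow> real \<Rightarrow> 'k::finite cyl \<Rightarrow> real" where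
  "hD r a q = (ht r a q)\<^sup>2 + (1 + hs r q)\<^sup>2"
definition hmap :: "real \<Rightarrow> real \<Rightarrow> 'k::finite cyl \<Rightarrow> 'k R2n" where
  "hmap r a q =
    (((2 * r / hD r a q) *\<^sub>R (ht r a q *\<^sub>R fst (fst q) - (1 + hs r q) *\<^sub>R snd (fst q)),
      (2 * r / hD r a q) *\<^sub>R (- (ht r a q *\<^sub>R snd (fst q)) - (1 + hs r q) *\<^sub>R fst (fst q))),
     ((1 - (hs r q)\<^sup>2 - (ht r a q)\<^sup>2) / hD r a q, 2 * ht r a q / hD r a q))"

definition GN :: "'k::finite R2n \<Rightarrow> real" where
  "GN p = (1 + fst (snd p))\<^sup>2 + (snd (snd p))\<^sup>2"
definition Gmap :: "real \<Rightarrow> real \<Rightarrow> 'k::finite R2n \<Rightarrow> 'k cyl" where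
  "Gmap r a p =
    (((1 / (r * GN p)) *\<^sub>R (snd (snd p) *\<^sub>R fst (fst p) - (1 + fst (snd p)) *\<^sub>R snd (fst p)),
      (- 1 / (r * GN p)) *\<^sub>R ((1 + fst (snd p)) *\<^sub>R fst (fst p) + snd (snd p) *\<^sub>R snd (fst p))),
     a - snd (snd p) / (r\<^sup>2 * GN p))"

lemma hs_nonneg: "hs r q \<ge> 0"
  unfolding hs_def by (intro mult_nonneg_nonneg add_nonneg_nonneg) auto

lemma hD_pos: "hD r a q > 0"
proof -
  have "(1 + hs r q)\<^sup>2 > 0" using hs_nonneg[of r q] by (intro zero_less_power) linarith
  then show ?thesis unfolding hD_def by (simp add: add_nonneg_pos)
qed

lemma Ck_hs: "Ck_on k (hs r) U"
  unfolding hs_def[abs_def] by (intro Ck_rules)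
lemma Ck_ht: "Ck_on k (ht r a) U"
  unfolding ht_def[abs_def] by (intro Ck_rules)
lemma Ck_hD: "Ck_on k (hD r a) U"
  unfolding hD_def[abs_def] by (intro Ck_rules Ck_hs Ck_ht)

lemma smooth_hmap: "smooth_on (hmap r a) UNIV"
  unfolding smooth_on_def
proof (intro conjI allI open_UNIV)
  fix k
  have nz: "\<forall>x\<in>UNIV. hD r a x \<noteq> 0" using hD_pos by (metis less_irrefl)
  show "Ck_on k (hmap r a) UNIV"
    unfolding hmap_def[abs_def]
    by (intro Ck_rules Ck_hs Ck_ht Ck_hD Ck_divide nz)
qed

lemma open_GN: "open {p::'k::finite R2n. GN p \<noteq> 0}"
  unfolding GN_def by (intro open_Collect_neq continuous_intros)

lemma Ck_Gmap:
  assumes "r \<noteq> 0"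
  shows "Ck_on k (Gmap r a) {p::'k::finite R2n. GN p \<noteq> 0}"
proof -
  have Ck_GN: "Ck_on k GN U" for k and U :: "'k R2n set"
    unfolding GN_def[abs_def] by (intro Ck_rules)
  have nz1: "\<forall>x\<in>{p::'k R2n. GN p \<noteq> 0}. r * GN x \<noteq> 0" using assms by auto
  have nz2: "\<forall>x\<in>{p::'k R2n. GN p \<noteq> 0}. r\<^sup>2 * GN x \<noteq> 0" using assms by auto
  show ?thesis
    unfolding Gmap_def[abs_def]
    by (intro Ck_rules Ck_divide Ck_GN nz1 nz2)
qed



lemma Gh:
  assumes r: "r \<noteq> 0"
  shows "Gmap r a (hmap r a q) = q"
proof -
  obtain x y z where q: "q = ((x,y),z)" by (metis prod.collapse)
  define s t D where "s = hs r q" and "t = ht r a q" and "D = hD r a q"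
  have D: "D = t\<^sup>2 + (1+s)\<^sup>2" "D > 0" using hD_pos[of r a q] unfolding s_def t_def D_def hD_def by auto
  have xn: "1 + (1 - s\<^sup>2 - t\<^sup>2)/D = 2*(1+s)/D" using D by (simp add: field_simps power2_eq_square)
  have GN: "GN (hmap r a q) = 4/D"
  proof -
    have "GN (hmap r a q) = (2*(1+s)/D)\<^sup>2 + (2*t/D)\<^sup>2"
      unfolding GN_def hmap_def s_def[symmetric] t_def[symmetric] D_def[symmetric] fst_conv snd_conv xn by simp
    also have "\<dots> = 4*(t\<^sup>2 + (1+s)\<^sup>2)/D\<^sup>2" using D(2) by (simp add: power_divide field_simps power2_eq_square)
    also have "\<dots> = 4/D" unfolding D(1)[symmetric] by (simp add: power2_eq_square)
    finally show ?thesis .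
  qed
  have z: "a - 2 * t / D / (r\<^sup>2 * (4 / D)) = z"
    using D r unfolding t_def ht_def q by (simp add: field_simps power2_eq_square)
  have e1: "(2 * t / D) *\<^sub>R ((2 * r / D) *\<^sub>R (t *\<^sub>R x - (1 + s) *\<^sub>R y)) -
      (2 * (1 + s) / D) *\<^sub>R ((2 * r / D) *\<^sub>R (- (t *\<^sub>R y) - (1 + s) *\<^sub>R x))
     = (4*r*(t\<^sup>2 + (1+s)\<^sup>2)/D\<^sup>2) *\<^sub>R x"
    using D(2) by (simp add: vec_eq_iff field_simps power2_eq_square)
  have e2: "(2 * (1 + s) / D) *\<^sub>R ((2 * r / D) *\<^sub>R (t *\<^sub>R x - (1 + s) *\<^sub>R y)) +
      (2 * t / D) *\<^sub>R ((2 * r / D) *\<^sub>R (- (t *\<^sub>R y) - (1 + s) *\<^sub>R x))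
     = (- 4*r*(t\<^sup>2 + (1+s)\<^sup>2)/D\<^sup>2) *\<^sub>R y"
    using D(2) by (simp add: vec_eq_iff field_simps power2_eq_square)
  have k: "4*r*(t\<^sup>2 + (1+s)\<^sup>2)/D\<^sup>2 = 4*r/D"
    unfolding D(1)[symmetric] by (simp add: power2_eq_square)
  have k2: "- 4*r*(t\<^sup>2 + (1+s)\<^sup>2)/D\<^sup>2 = - (4*r/D)"
    unfolding D(1)[symmetric] by (simp add: power2_eq_square)
  have c1: "(1 / (r * (4 / D))) * (4*r/D) = 1"
    using D(2) r by simp
  have c2: "(- 1 / (r * (4 / D))) * (- (4*r/D)) = 1"
    using D(2) r by simp
  have hq: "hmap r a q = (((2*r/D) *\<^sub>R (t *\<^sub>R x - (1+s) *\<^sub>R y), (2*r/D) *\<^sub>R (-(t *\<^sub>R y) - (1+s) *\<^sub>R x)), ((1 - s\<^sup>2 - t\<^sup>2)/D, 2*t/D))"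
    unfolding hmap_def s_def t_def D_def q by simp
  have "Gmap r a (hmap r a q) = (((1 / (r * (4 / D))) *\<^sub>R ((4*r/D) *\<^sub>R x), (- 1 / (r * (4 / D))) *\<^sub>R (- (4*r/D) *\<^sub>R y)), z)"
    unfolding Gmap_def GN unfolding hq fst_conv snd_conv xn e1 e2 k k2 z ..
  also have "\<dots> = q" unfolding scaleR_scaleR c1 c2 q by simp
  finally show ?thesis .
qed



lemma norm_R2n: "(norm (p::'k::finite R2n))\<^sup>2 =
   fst (fst p) \<bullet> fst (fst p) + snd (fst p) \<bullet> snd (fst p) + (fst (snd p))\<^sup>2 + (snd (snd p))\<^sup>2"
  by (cases p) (auto simp: norm_Pair power2_norm_eq_inner)

lemma inner_PQ:
  fixes x y :: "'a::real_inner"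
  shows "(t *\<^sub>R x - u *\<^sub>R y) \<bullet> (t *\<^sub>R x - u *\<^sub>R y) + (- (t *\<^sub>R y) - u *\<^sub>R x) \<bullet> (- (t *\<^sub>R y) - u *\<^sub>R x)
     = (t\<^sup>2 + u\<^sup>2) * (x \<bullet> x + y \<bullet> y)"
  by (simp add: inner_diff_left inner_diff_right inner_commute[of y x] algebra_simps power2_eq_square)

lemma inner_PQ2:
  fixes A B :: "'a::real_inner"
  shows "(d *\<^sub>R A - c *\<^sub>R B) \<bullet> (d *\<^sub>R A - c *\<^sub>R B) + (c *\<^sub>R A + d *\<^sub>R B) \<bullet> (c *\<^sub>R A + d *\<^sub>R B)
     = (d\<^sup>2 + c\<^sup>2) * (A \<bullet> A + B \<bullet> B)"
  by (simp add: inner_diff_left inner_diff_right inner_add_left inner_add_right inner_commute[of B A] algebra_simps power2_eq_square)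

lemma norm_hmap: "norm (hmap r a q) = 1"
proof -
  obtain x y z where q: "q = ((x,y),z)" by (metis prod.collapse)
  define s t D where "s = hs r q" and "t = ht r a q" and "D = hD r a q"
  have D: "D = t\<^sup>2 + (1+s)\<^sup>2" "D > 0" using hD_pos[of r a q] unfolding s_def t_def D_def hD_def by auto
  have s: "s = r\<^sup>2 * (x \<bullet> x + y \<bullet> y)" unfolding s_def hs_def q by simp
  have hq: "hmap r a q = (((2*r/D) *\<^sub>R (t *\<^sub>R x - (1+s) *\<^sub>R y), (2*r/D) *\<^sub>R (-(t *\<^sub>R y) - (1+s) *\<^sub>R x)), ((1 - s\<^sup>2 - t\<^sup>2)/D, 2*t/D))"
    unfolding hmap_def s_def t_def D_def q by simp
  have "(norm (hmap r a q))\<^sup>2 = (2*r/D)\<^sup>2 * ((t\<^sup>2 + (1+s)\<^sup>2) * (x \<bullet> x + y \<bullet> y)) + ((1 - s\<^sup>2 - t\<^sup>2)/D)\<^sup>2 + (2*t/D)\<^sup>2"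
    unfolding norm_R2n hq fst_conv snd_conv inner_PQ[symmetric]
    by (simp add: power2_eq_square algebra_simps)
  also have "\<dots> = 4 * s / D + ((1 - s\<^sup>2 - t\<^sup>2)/D)\<^sup>2 + (2*t/D)\<^sup>2"
  proof -
    have "(2*r/D)\<^sup>2 * ((t\<^sup>2 + (1+s)\<^sup>2) * (x \<bullet> x + y \<bullet> y)) = 4 * s / D"
      unfolding D(1)[symmetric] unfolding s using D(2) by (simp add: power2_eq_square field_simps)
    then show ?thesis by simp
  qed
  also have "\<dots> = (4 * s * D + (1 - s\<^sup>2 - t\<^sup>2)\<^sup>2 + 4 * t\<^sup>2) / D\<^sup>2"
    using D(2) by (simp add: field_simps power2_eq_square)
  also have "4 * s * D + (1 - s\<^sup>2 - t\<^sup>2)\<^sup>2 + 4 * t\<^sup>2 = D\<^sup>2"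
    unfolding D(1) by (simp add: power2_eq_square algebra_simps)
  finally have "(norm (hmap r a q))\<^sup>2 = 1" using D(2) by simp
  then show ?thesis using norm_ge_zero[of "hmap r a q"] by (auto simp: power2_eq_1_iff)
qed

lemma hmap_yn: "snd (snd (hmap r a q)) = 2 * ht r a q / hD r a q"
  unfolding hmap_def by simp

lemma hG:
  assumes r: "r \<noteq> 0" and p1: "norm p = 1" and N0: "GN p \<noteq> 0"
  shows "hmap r a (Gmap r a p) = (p :: 'k::finite R2n)"
proof -
  obtain A B xn yn where p: "p = ((A,B),(xn,yn))" by (metis prod.collapse)
  define N where "N = GN p"
  have N: "N = (1+xn)\<^sup>2 + yn\<^sup>2" "N \<noteq> 0" using N0 unfolding N_def GN_def p by auto
  have Nalt: "yn\<^sup>2 + (1+xn)\<^sup>2 = N" using N(1) by simp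
  have sph: "A \<bullet> A + B \<bullet> B = 1 - xn\<^sup>2 - yn\<^sup>2"
    using arg_cong[OF p1, of "\<lambda>u. u\<^sup>2"] unfolding norm_R2n p by simp
  define q where "q = Gmap r a p"
  have q: "q = (((1 / (r * N)) *\<^sub>R (yn *\<^sub>R A - (1 + xn) *\<^sub>R B),
      (- 1 / (r * N)) *\<^sub>R ((1 + xn) *\<^sub>R A + yn *\<^sub>R B)), a - yn / (r\<^sup>2 * N))"
    unfolding q_def Gmap_def N_def p by simp
  have hs: "hs r q = 2 * (1+xn) / N - 1"
  proof -
    have "hs r q = r\<^sup>2 * ((1 / (r * N))\<^sup>2 * ((yn\<^sup>2 + (1+xn)\<^sup>2) * (A \<bullet> A + B \<bullet> B)))"
      unfolding hs_def q fst_conv snd_conv inner_PQ2[symmetric]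
      by (simp add: power2_eq_square algebra_simps)
    also have "\<dots> = (A \<bullet> A + B \<bullet> B) / N"
      unfolding Nalt using r N(2) by (simp add: field_simps power2_eq_square)
    also have "\<dots> = 2 * (1+xn) / N - 1"
      unfolding sph using N by (simp add: field_simps power2_eq_square)
    finally show ?thesis .
  qed
  have ht: "ht r a q = 2 * yn / N"
    unfolding ht_def q using r N(2) by (simp add: field_simps power2_eq_square)
  have hD: "hD r a q = 4 / N"
  proof -
    have "hD r a q = 4 * (yn\<^sup>2 + (1+xn)\<^sup>2) / N\<^sup>2"
      unfolding hD_def hs ht using N(2) by (simp add: field_simps power2_eq_square)
    then show ?thesis unfolding Nalt using N(2) by (simp add: power2_eq_square)
  qed
  have e1: "(2 * r / (4 / N)) *\<^sub>R ((2 * yn / N) *\<^sub>R ((1 / (r * N)) *\<^sub>R (yn *\<^sub>R A - (1 + xn) *\<^sub>R B))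
     - (1 + (2 * (1 + xn) / N - 1)) *\<^sub>R ((- 1 / (r * N)) *\<^sub>R ((1 + xn) *\<^sub>R A + yn *\<^sub>R B))) = ((yn\<^sup>2 + (1+xn)\<^sup>2) / N) *\<^sub>R A"
    using r N(2) by (simp add: vec_eq_iff field_simps power2_eq_square)
  have e2: "(2 * r / (4 / N)) *\<^sub>R (- ((2 * yn / N) *\<^sub>R ((- 1 / (r * N)) *\<^sub>R ((1 + xn) *\<^sub>R A + yn *\<^sub>R B)))
     - (1 + (2 * (1 + xn) / N - 1)) *\<^sub>R ((1 / (r * N)) *\<^sub>R (yn *\<^sub>R A - (1 + xn) *\<^sub>R B))) = ((yn\<^sup>2 + (1+xn)\<^sup>2) / N) *\<^sub>R B"
    using r N(2) by (simp add: vec_eq_iff field_simps power2_eq_square)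
  have e3: "(1 - (2 * (1 + xn) / N - 1)\<^sup>2 - (2 * yn / N)\<^sup>2) / (4 / N) = xn"
  proof -
    have "(1 - (2 * (1 + xn) / N - 1)\<^sup>2 - (2 * yn / N)\<^sup>2) / (4 / N)
       = (1 + xn) - (yn\<^sup>2 + (1+xn)\<^sup>2) / N"
      using N(2) by (simp add: field_simps power2_eq_square)
    then show ?thesis unfolding Nalt using N(2) by simp
  qed
  have e4: "2 * (2 * yn / N) / (4 / N) = yn"
    using N(2) by (simp add: field_simps)
  show ?thesis
    unfolding q_def[symmetric]
    unfolding hmap_def hs ht hD
    unfolding q fst_conv snd_conv e1 e2 e3 e4 Nalt using N(2) p by simp
qed



definition hds :: "real \<Rightarrow> 'k::finite cyl \<Rightarrow> 'k cyl \<Rightarrow> real" where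
  "hds r q v = 2 * r\<^sup>2 * (fst (fst q) \<bullet> fst (fst v) + snd (fst q) \<bullet> snd (fst v))"
definition hdt :: "real \<Rightarrow> 'k::finite cyl \<Rightarrow> real" where
  "hdt r v = - 2 * r\<^sup>2 * snd v"
definition hdD :: "real \<Rightarrow> real \<Rightarrow> 'k::finite cyl \<Rightarrow> 'k cyl \<Rightarrow> real" where
  "hdD r a q v = 2 * ht r a q * hdt r v + 2 * (1 + hs r q) * hds r q v"

lemma hs_deriv: "(hs r has_derivative hds r q) (at q)"
  unfolding hs_def[abs_def] hds_def[abs_def]
  apply (rule has_derivative_eq_rhs)
   apply (rule derivative_eq_intros refl)+
  apply (simp add: fun_eq_iff inner_commute algebra_simps)
  done

lemma ht_deriv: "(ht r a has_derivative hdt r) (at q)"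
  unfolding ht_def[abs_def] hdt_def[abs_def]
  apply (rule has_derivative_eq_rhs)
   apply (rule derivative_eq_intros refl)+
  apply (simp add: fun_eq_iff algebra_simps)
  done

lemma hD_deriv: "(hD r a has_derivative hdD r a q) (at q)"
  unfolding hD_def[abs_def] hdD_def[abs_def]
  apply (rule has_derivative_eq_rhs)
   apply (rule derivative_eq_intros refl hs_deriv ht_deriv)+
  apply (simp add: fun_eq_iff algebra_simps)
  done

definition hder_gen :: "real \<Rightarrow> ('k::finite) R2m \<Rightarrow> real \<Rightarrow> real \<Rightarrow> real \<Rightarrow> real \<Rightarrow> real \<Rightarrow> real \<Rightarrow> 'k R2m \<Rightarrow> 'k R2n" where
  "hder_gen r w s t D ds dt dD v =
    (((-2*r*dD/D\<^sup>2) *\<^sub>R (t *\<^sub>R fst w - (1+s) *\<^sub>R snd w)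
        + (2*r/D) *\<^sub>R (dt *\<^sub>R fst w + t *\<^sub>R fst v - ds *\<^sub>R snd w - (1+s) *\<^sub>R snd v),
      (-2*r*dD/D\<^sup>2) *\<^sub>R (-(t *\<^sub>R snd w) - (1+s) *\<^sub>R fst w)
        + (2*r/D) *\<^sub>R (-(dt *\<^sub>R snd w) - t *\<^sub>R snd v - ds *\<^sub>R fst w - (1+s) *\<^sub>R fst v)),
     ((- 2 * s * ds - 2 * t * dt)/D - (1 - s\<^sup>2 - t\<^sup>2)*dD/D\<^sup>2, 2*dt/D - 2*t*dD/D\<^sup>2))"

definition hderiv :: "real \<Rightarrow> real \<Rightarrow> 'k::finite cyl \<Rightarrow> 'k cyl \<Rightarrow> 'k R2n" where
  "hderiv r a q v = hder_gen r (fst q) (hs r q) (ht r a q) (hD r a q) (hds r q v) (hdt r v) (hdD r a q v) (fst v)"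

lemma hmap_deriv: "(hmap r a has_derivative hderiv r a q) (at q)"
proof -
  have nz: "hD r a q \<noteq> 0" using hD_pos[of r a q] by simp
  show ?thesis
  unfolding hmap_def[abs_def] hderiv_def[abs_def] hder_gen_def
  apply (rule has_derivative_eq_rhs)
   apply (rule derivative_eq_intros refl hs_deriv ht_deriv hD_deriv nz)+
  apply (simp add: fun_eq_iff vec_eq_iff field_simps power2_eq_square nz)
  done
qed



lemma lam_scale:
  fixes P Q dP dQ :: "'a::real_inner"
  shows "(c *\<^sub>R P) \<bullet> (dc *\<^sub>R Q + c *\<^sub>R dQ) - (c *\<^sub>R Q) \<bullet> (dc *\<^sub>R P + c *\<^sub>R dP)
    = c\<^sup>2 * (P \<bullet> dQ - Q \<bullet> dP)"
  by (simp add: inner_add_right inner_commute[of Q P] algebra_simps power2_eq_square)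

lemma PQ_deriv:
  fixes x y vx vy :: "'a::real_inner"
  shows "(t *\<^sub>R x - u *\<^sub>R y) \<bullet> (-(dt *\<^sub>R y) - t *\<^sub>R vy - ds *\<^sub>R x - u *\<^sub>R vx)
       - (-(t *\<^sub>R y) - u *\<^sub>R x) \<bullet> (dt *\<^sub>R x + t *\<^sub>R vx - ds *\<^sub>R y - u *\<^sub>R vy)
     = - (t\<^sup>2 + u\<^sup>2) * (x \<bullet> vy - y \<bullet> vx) + (x \<bullet> x + y \<bullet> y) * (u * dt - t * ds)"
  by (simp add: inner_diff_left inner_diff_right inner_add_left inner_add_right
      inner_commute[of y x] algebra_simps power2_eq_square)

lemma contact_gen:
  fixes x y vx vy :: "real^'k::finite"
  assumes D0: "D \<noteq> 0" and D: "D = t\<^sup>2 + (1+s)\<^sup>2" and s: "s = r\<^sup>2 * (x \<bullet> x + y \<bullet> y)"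
  shows "alpha_std (((2 * r / D) *\<^sub>R (t *\<^sub>R x - (1 + s) *\<^sub>R y),
                     (2 * r / D) *\<^sub>R (- (t *\<^sub>R y) - (1 + s) *\<^sub>R x)),
                    ((1 - s\<^sup>2 - t\<^sup>2) / D, 2 * t / D))
                   (hder_gen r (x, y) s t D ds dt dD (vx, vy))
         = (- 4 * r\<^sup>2 * (x \<bullet> vy - y \<bullet> vx) + 2 * dt) / D"
proof -
  define m where "m = x \<bullet> x + y \<bullet> y"
  define L where "L = x \<bullet> vy - y \<bullet> vx"
  have lam: "lambda_st ((2 * r / D) *\<^sub>R (t *\<^sub>R x - (1 + s) *\<^sub>R y),
                     (2 * r / D) *\<^sub>R (- (t *\<^sub>R y) - (1 + s) *\<^sub>R x))
       (fst (hder_gen r (x, y) s t D ds dt dD (vx, vy)))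
     = (2 * r / D)\<^sup>2 * (- (t\<^sup>2 + (1 + s)\<^sup>2) * L + m * ((1 + s) * dt - t * ds))"
    unfolding lambda_st_def hder_gen_def fst_conv snd_conv lam_scale PQ_deriv m_def L_def ..
  have "alpha_std (((2 * r / D) *\<^sub>R (t *\<^sub>R x - (1 + s) *\<^sub>R y),
                     (2 * r / D) *\<^sub>R (- (t *\<^sub>R y) - (1 + s) *\<^sub>R x)),
                    ((1 - s\<^sup>2 - t\<^sup>2) / D, 2 * t / D))
                   (hder_gen r (x, y) s t D ds dt dD (vx, vy))
     = (2 * r / D)\<^sup>2 * (- (t\<^sup>2 + (1 + s)\<^sup>2) * L + m * ((1 + s) * dt - t * ds))
       + ((1 - s\<^sup>2 - t\<^sup>2) / D * (2 * dt / D - 2 * t * dD / D\<^sup>2)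
          - 2 * t / D * ((- 2 * s * ds - 2 * t * dt) / D - (1 - s\<^sup>2 - t\<^sup>2) * dD / D\<^sup>2))"
    unfolding alpha_std_def lam[symmetric] by (simp add: hder_gen_def)
  also have "\<dots> = (4 * r\<^sup>2 * (- (t\<^sup>2 + (1 + s)\<^sup>2) * L + m * ((1 + s) * dt - t * ds))
       + 2 * (1 - s\<^sup>2 + t\<^sup>2) * dt + 4 * t * s * ds) / D\<^sup>2"
    using D0 by (simp add: field_simps power2_eq_square)
  also have "4 * r\<^sup>2 * (- (t\<^sup>2 + (1 + s)\<^sup>2) * L + m * ((1 + s) * dt - t * ds))
       + 2 * (1 - s\<^sup>2 + t\<^sup>2) * dt + 4 * t * s * ds = D * (- 4 * r\<^sup>2 * L + 2 * dt)"
    unfolding D s m_def[symmetric] by (simp add: algebra_simps power2_eq_square)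
  also have "D * (- 4 * r\<^sup>2 * L + 2 * dt) / D\<^sup>2 = (- 4 * r\<^sup>2 * L + 2 * dt) / D"
    using D0 by (simp add: power2_eq_square)
  finally show ?thesis unfolding L_def .
qed



lemma GN_hmap: "GN (hmap r a q) = 4 / hD r a q"
proof -
  define s t D where "s = hs r q" and "t = ht r a q" and "D = hD r a q"
  have D: "D = t\<^sup>2 + (1+s)\<^sup>2" "D > 0" using hD_pos[of r a q] unfolding s_def t_def D_def hD_def by auto
  have xn: "1 + (1 - s\<^sup>2 - t\<^sup>2)/D = 2*(1+s)/D" using D by (simp add: field_simps power2_eq_square)
  have "GN (hmap r a q) = (2*(1+s)/D)\<^sup>2 + (2*t/D)\<^sup>2"
    unfolding GN_def hmap_def s_def[symmetric] t_def[symmetric] D_def[symmetric] fst_conv snd_conv xn by simp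
  also have "\<dots> = 4*(t\<^sup>2 + (1+s)\<^sup>2)/D\<^sup>2" using D(2) by (simp add: power_divide field_simps power2_eq_square)
  also have "\<dots> = 4/D" unfolding D(1)[symmetric] by (simp add: power2_eq_square)
  finally show ?thesis unfolding D_def .
qed

lemma contact_hmap:
  "alpha_std (hmap r a q) (hderiv r a q v) = (- 4 * r\<^sup>2 / hD r a q) * beta_cyl q v"
proof -
  obtain x y z where q: "q = ((x,y),z)" by (metis prod.collapse)
  obtain vx vy vz where v: "v = ((vx,vy),vz)" by (metis prod.collapse)
  define s t D where "s = hs r q" and "t = ht r a q" and "D = hD r a q"
  have D: "D = t\<^sup>2 + (1+s)\<^sup>2" "D > 0" using hD_pos[of r a q] unfolding s_def t_def D_def hD_def by auto
  have s: "s = r\<^sup>2 * (x \<bullet> x + y \<bullet> y)" unfolding s_def hs_def q by simp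
  have hq: "hmap r a q = (((2 * r / D) *\<^sub>R (t *\<^sub>R x - (1 + s) *\<^sub>R y),
                     (2 * r / D) *\<^sub>R (- (t *\<^sub>R y) - (1 + s) *\<^sub>R x)),
                    ((1 - s\<^sup>2 - t\<^sup>2) / D, 2 * t / D))"
    unfolding hmap_def s_def t_def D_def q by simp
  have hd: "hderiv r a q v = hder_gen r (x, y) s t D (hds r q v) (hdt r v) (hdD r a q v) (vx, vy)"
    unfolding hderiv_def s_def t_def D_def q v by simp
  have "alpha_std (hmap r a q) (hderiv r a q v) = (- 4 * r\<^sup>2 * (x \<bullet> vy - y \<bullet> vx) + 2 * hdt r v) / D"
    unfolding hq hd by (rule contact_gen[OF _ D(1) s]) (use D(2) in simp)
  also have "\<dots> = (- 4 * r\<^sup>2 / D) * beta_cyl q v"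
    unfolding beta_cyl_def lambda_st_def hdt_def q v using D(2) by (simp add: field_simps)
  finally show ?thesis unfolding D_def .
qed

lemma frechet_hmap: "frechet_derivative (hmap r a) (at q) = hderiv r a q"
  by (rule frechet_derivative_at[OF hmap_deriv, symmetric])

lemma inj_hderiv:
  assumes r: "r \<noteq> 0"
  shows "inj (hderiv r a (q::'k::finite cyl))"
proof -
  have "Ck_on (Suc 0) (Gmap r a) {p::'k R2n. GN p \<noteq> 0}" by (rule Ck_Gmap[OF r])
  then obtain G' where G': "\<forall>p\<in>{p::'k R2n. GN p \<noteq> 0}. (Gmap r a has_derivative G' p) (at p)"
    by auto
  have "GN (hmap r a q) \<noteq> 0" unfolding GN_hmap using hD_pos[of r a q] by simp
  then have G'h: "(Gmap r a has_derivative G' (hmap r a q)) (at (hmap r a q))"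
    by (intro G'[rule_format]) simp
  have c: "((\<lambda>x. Gmap r a (hmap r a x)) has_derivative (\<lambda>v. G' (hmap r a q) (hderiv r a q v))) (at q)"
    by (rule has_derivative_compose[OF hmap_deriv G'h])
  have idf: "(\<lambda>x. Gmap r a (hmap r a x)) = (\<lambda>x. x)" by (rule ext) (rule Gh[OF r])
  have c2: "((\<lambda>x. Gmap r a (hmap r a x)) has_derivative (\<lambda>v. v)) (at q)"
    unfolding idf by (rule has_derivative_ident)
  have "(\<lambda>v. G' (hmap r a q) (hderiv r a q v)) = (\<lambda>v. v)"
    by (rule has_derivative_unique[OF c c2])
  then show ?thesis by (metis injI)
qed

lemma inj_hmap: "r \<noteq> 0 \<Longrightarrow> inj (hmap r a)"
  by (metis Gh injI)



lemma Gp_in: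
  fixes p :: "'k::finite R2n"
  assumes a: "a > 0" and e: "\<epsilon> > 0" and r: "r = 2 * (1 + 1/a) / \<epsilon>\<^sup>2"
    and p1: "norm p = 1" and yn0: "snd (snd p) \<ge> 0" and d: "dist pole_minus p \<ge> \<epsilon>"
  shows "GN p \<noteq> 0 \<and> Gmap r a p \<in> wcyl a \<and> (snd (snd p) = 0 \<longrightarrow> Gmap r a p \<in> wcyl_top a)"
proof -
  obtain A B xn yn where p: "p = ((A,B),(xn,yn))" by (metis prod.collapse)
  have sph: "A \<bullet> A + B \<bullet> B + xn\<^sup>2 + yn\<^sup>2 = 1"
    using arg_cong[OF p1, of "\<lambda>u. u\<^sup>2"] unfolding norm_R2n p by simp
  have AB: "A \<bullet> A + B \<bullet> B \<ge> 0" by simp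
  have AB1: "A \<bullet> A + B \<bullet> B \<le> 1" using sph by (smt (verit) zero_le_power2)
  have yn: "yn \<ge> 0" "yn \<le> 1"
  proof -
    show "yn \<ge> 0" using yn0 p by simp
    have "yn\<^sup>2 \<le> 1\<^sup>2" using sph AB by (smt (verit) zero_le_power2 one_power2)
    then show "yn \<le> 1" by (rule power2_le_imp_le) simp
  qed
  have dist2: "(dist pole_minus p)\<^sup>2 = 2 + 2 * xn"
  proof -
    have "(dist pole_minus p)\<^sup>2 = A \<bullet> A + B \<bullet> B + (-1 - xn)\<^sup>2 + yn\<^sup>2"
      unfolding dist_norm norm_R2n pole_minus_def p by simp
    also have "\<dots> = 2 + 2 * xn" using sph by (simp add: power2_eq_square algebra_simps)
    finally show ?thesis .
  qed
  have "\<epsilon>\<^sup>2 \<le> (dist pole_minus p)\<^sup>2" using d e by (intro power_mono) auto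
  then have c: "1 + xn \<ge> \<epsilon>\<^sup>2 / 2" using dist2 by simp
  have e2: "\<epsilon>\<^sup>2 > 0" using e by simp
  define N where "N = GN p"
  have N: "N = (1+xn)\<^sup>2 + yn\<^sup>2" unfolding N_def GN_def p by simp
  have "(\<epsilon>\<^sup>2 / 2)\<^sup>2 \<le> (1 + xn)\<^sup>2" using c e2 by (intro power_mono) auto
  then have Nge: "N \<ge> (\<epsilon>\<^sup>2 / 2)\<^sup>2" unfolding N by (smt (verit) zero_le_power2)
  have "(\<epsilon>\<^sup>2 / 2)\<^sup>2 > 0" using e2 by simp
  then have Npos: "N > 0" using Nge by linarith
  define K where "K = r\<^sup>2 * N"
  define u where "u = 1 / a"
  have ia: "u > 0" unfolding u_def using a by simp
  have rpos: "r > 0" unfolding r u_def[symmetric] using ia e2 by simp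
  have "r * (\<epsilon>\<^sup>2 / 2) = 1 + u"
    unfolding r u_def[symmetric] using e2 by (simp add: field_simps)
  then have "r\<^sup>2 * (\<epsilon>\<^sup>2 / 2)\<^sup>2 = (1 + u)\<^sup>2"
    by (metis power_mult_distrib)
  then have Kge: "K \<ge> (1 + u)\<^sup>2"
    unfolding K_def using Nge rpos by (metis mult_left_mono zero_le_power2)
  have "(1 + u)\<^sup>2 \<ge> 1" using ia by (intro one_le_power) simp
  then have K1: "K \<ge> 1" using Kge by linarith
  have "(1 + u)\<^sup>2 = 1 + 2 * u + u * u" by (simp add: power2_eq_square algebra_simps)
  moreover have "u * u \<ge> 0" by simp
  ultimately have "(1 + u)\<^sup>2 \<ge> u" using ia by linarith
  then have Ka: "K \<ge> 1/a" using Kge unfolding u_def by linarith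
  have Kpos: "K > 0" using K1 by linarith
  have iK1: "1 / K \<le> 1" using K1 by (simp add: divide_le_eq)
  have iKa: "1 / K \<le> a" using Ka Kpos a by (simp add: field_simps)
  define x y where "x = (1 / (r * N)) *\<^sub>R (yn *\<^sub>R A - (1 + xn) *\<^sub>R B)"
    and "y = (- 1 / (r * N)) *\<^sub>R ((1 + xn) *\<^sub>R A + yn *\<^sub>R B)"
  have Gp: "Gmap r a p = ((x, y), a - yn / K)"
    unfolding Gmap_def x_def y_def K_def N_def p by simp
  have Nalt: "yn\<^sup>2 + (1+xn)\<^sup>2 = N" using N by simp
  have "(norm (x, y))\<^sup>2 = x \<bullet> x + y \<bullet> y"
    by (simp add: norm_Pair power2_norm_eq_inner)
  also have "\<dots> = (1 / (r * N))\<^sup>2 * ((yn *\<^sub>R A - (1 + xn) *\<^sub>R B) \<bullet> (yn *\<^sub>R A - (1 + xn) *\<^sub>R B)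
       + ((1 + xn) *\<^sub>R A + yn *\<^sub>R B) \<bullet> ((1 + xn) *\<^sub>R A + yn *\<^sub>R B))"
    unfolding x_def y_def inner_scaleR_left inner_scaleR_right
    by (simp add: power2_eq_square distrib_left)
  also have "\<dots> = (1 / (r * N))\<^sup>2 * ((yn\<^sup>2 + (1+xn)\<^sup>2) * (A \<bullet> A + B \<bullet> B))"
    unfolding inner_PQ2 ..
  also have "\<dots> = (A \<bullet> A + B \<bullet> B) / K"
    unfolding Nalt K_def using rpos Npos by (simp add: field_simps power2_eq_square)
  also have "\<dots> \<le> 1 / K" using AB1 Kpos by (simp add: divide_right_mono)
  also have "\<dots> \<le> 1" by (rule iK1)
  finally have "(norm (x, y))\<^sup>2 \<le> 1" .
  then have nxy: "norm (x, y) \<le> 1" using power2_le_imp_le[of "norm (x, y)" 1] by simp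
  have z1: "a - yn / K \<le> a" using yn Kpos by simp
  have "yn / K \<le> 1 / K" using yn Kpos by (simp add: divide_right_mono)
  then have z0: "0 \<le> a - yn / K" using iKa by simp
  have "GN p \<noteq> 0" using Npos N_def by simp
  moreover have "Gmap r a p \<in> wcyl a" unfolding Gp wcyl_def using nxy z0 z1 by simp
  moreover have "snd (snd p) = 0 \<longrightarrow> Gmap r a p \<in> wcyl_top a"
    unfolding Gp wcyl_top_def using nxy p by simp
  ultimately show ?thesis by blast
qed



lemma pole_minus_bdry: "pole_minus \<in> std_ball_bdry"
  unfolding pole_minus_def std_ball_bdry_def by (simp add: norm_Pair)

theorem lemma7p5:
  fixes a :: real and \<epsilon> :: real
  assumes "a > 0" and "\<epsilon> > 0"
  shows "\<exists>h :: 'k::finite cyl \<Rightarrow> 'k R2n.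
           contact_embedding a h \<and>
           h ` wcyl_top a \<subseteq> std_ball_bdry \<and>
           std_ball_bdry - h ` wcyl_top a \<subseteq> ball pole_minus \<epsilon> \<and>
           std_ball - h ` wcyl a \<subseteq> {p. infdist p std_ball_bdry < \<epsilon>}"
proof -
  define r where "r = 2 * (1 + 1/a) / \<epsilon>\<^sup>2"
  have rpos: "r > 0" unfolding r_def using assms by (simp add: add_pos_pos)
  then have r0: "r \<noteq> 0" by simp
  define h where "h = (hmap r a :: 'k cyl \<Rightarrow> 'k R2n)"
  have yn_nonneg: "snd (snd (h q)) \<ge> 0" if "q \<in> wcyl a" for q
  proof -
    have "ht r a q \<ge> 0" using that unfolding ht_def wcyl_def by simp
    then show ?thesis unfolding h_def hmap_yn using hD_pos[of r a q] by simp
  qed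
  have ce: "contact_embedding a h"
    unfolding contact_embedding_def
  proof (intro conjI ballI)
    show "\<exists>U. wcyl a \<subseteq> U \<and> smooth_on h U" unfolding h_def using smooth_hmap by blast
    show "inj_on h (wcyl a)" unfolding h_def using inj_hmap[OF r0] by (rule inj_on_subset) simp
    show "h ` wcyl a \<subseteq> std_ball"
      using yn_nonneg unfolding std_ball_def h_def by (auto simp: norm_hmap)
  next
    fix q :: "'k cyl" assume q: "q \<in> wcyl a"
    show "inj (frechet_derivative h (at q))" unfolding h_def frechet_hmap by (rule inj_hderiv[OF r0])
    show "\<exists>f. f \<noteq> 0 \<and> (\<forall>v. alpha_std (h q) (frechet_derivative h (at q) v) = f * beta_cyl q v)"
    proof (intro exI conjI allI)
      show "- 4 * r\<^sup>2 / hD r a q \<noteq> 0" using r0 hD_pos[of r a q] by simp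
      fix v show "alpha_std (h q) (frechet_derivative h (at q) v) = (- 4 * r\<^sup>2 / hD r a q) * beta_cyl q v"
        unfolding h_def frechet_hmap by (rule contact_hmap)
    qed
  qed
  have top: "h ` wcyl_top a \<subseteq> std_ball_bdry"
  proof
    fix p assume "p \<in> h ` wcyl_top a"
    then obtain q where q: "q \<in> wcyl_top a" "p = h q" by auto
    have "ht r a q = 0" using q unfolding ht_def wcyl_top_def by simp
    then show "p \<in> std_ball_bdry" unfolding std_ball_bdry_def q h_def by (simp add: norm_hmap hmap_yn)
  qed
  have main: "GN p \<noteq> 0 \<and> Gmap r a p \<in> wcyl a \<and> (snd (snd p) = 0 \<longrightarrow> Gmap r a p \<in> wcyl_top a)"
    if "p \<in> std_ball" "dist pole_minus p \<ge> \<epsilon>" for p :: "'k R2n"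
    by (rule Gp_in[OF assms r_def]) (use that in \<open>auto simp: std_ball_def\<close>)
  have hGp: "h (Gmap r a p) = p" if "p \<in> std_ball" "GN p \<noteq> 0" for p :: "'k R2n"
    unfolding h_def using hG[OF r0 _ that(2)] that(1) unfolding std_ball_def by auto
  have bd: "std_ball_bdry - h ` wcyl_top a \<subseteq> ball pole_minus \<epsilon>"
  proof
    fix p assume p: "p \<in> std_ball_bdry - h ` wcyl_top a"
    then have pb: "p \<in> std_ball" unfolding std_ball_bdry_def std_ball_def by auto
    show "p \<in> ball pole_minus \<epsilon>"
    proof (rule ccontr)
      assume "p \<notin> ball pole_minus \<epsilon>"
      then have "dist pole_minus p \<ge> \<epsilon>" by simp
      from main[OF pb this] have "GN p \<noteq> 0" "Gmap r a p \<in> wcyl_top a"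
        using p unfolding std_ball_bdry_def by auto
      then have "p \<in> h ` wcyl_top a" using hGp[OF pb] by (metis image_eqI)
      then show False using p by simp
    qed
  qed
  have bl: "std_ball - h ` wcyl a \<subseteq> {p. infdist p std_ball_bdry < \<epsilon>}"
  proof
    fix p assume p: "p \<in> std_ball - h ` wcyl a"
    then have pb: "p \<in> std_ball" by simp
    show "p \<in> {p. infdist p std_ball_bdry < \<epsilon>}"
    proof (cases "dist pole_minus p < \<epsilon>")
      case True
      have "infdist p std_ball_bdry \<le> dist p pole_minus" by (rule infdist_le[OF pole_minus_bdry])
      then show ?thesis using True by (simp add: dist_commute)
    next
      case False
      then have "dist pole_minus p \<ge> \<epsilon>" by simp
      from main[OF pb this] have "GN p \<noteq> 0" "Gmap r a p \<in> wcyl a" by auto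
      then have "p \<in> h ` wcyl a" using hGp[OF pb] by (metis image_eqI)
      then show ?thesis using p by simp
    qed
  qed
  show ?thesis using ce top bd bl by blast
qed


end
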